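(* A set of pairwise disjoint convex polygons in $\mathbb{R}^2$ cannot always be reconstructed from a set of markers containing at least one marker per edge: there exist two distinct finite sets $S\neq S'$ of pairwise disjoint convex polygons and a finite set $\mathcal{M}$ of point-normal markers such that both $S$ and $S'$ are fully consistent with $\mathcal{M}$.
   Context: A point-normal marker in the plane is a pair $(p,n)$ with $p\in\mathbb{R}^2$ and $n$ a unit vector. A marker $(p,n)$ is on and aligned with an edge $e$ of a polygon $Q$ if $p\in e$ and $n$ is the outward unit normal of $Q$ along $e$. A set of polygons is consistent with a set of markers if every marker is on and aligned with an edge of one of the polygons; it is fully consistent if moreover every edge of every polygon in the set has at least one marker on and aligned with it. *)

theory Defs
  imports "HOL-Analysis.Analysis"
begin

type_synonym pt = "real ^ 2"

definition convex_polygon :: "pt set \<Rightarrow> bool" where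
  "convex_polygon Q \<longleftrightarrow> polytope Q \<and> aff_dim Q = 2"

definition is_edge :: "pt set \<Rightarrow> pt set \<Rightarrow> bool" where
  "is_edge e Q \<longleftrightarrow> e face_of Q \<and> aff_dim e = 1"

definition outward_normal :: "pt set \<Rightarrow> pt set \<Rightarrow> pt \<Rightarrow> bool" where
  "outward_normal Q e n \<longleftrightarrow> norm n = 1 \<and> (\<forall>y\<in>e. \<forall>x\<in>Q. n \<bullet> x \<le> n \<bullet> y)"

type_synonym marker = "pt \<times> pt"

definition is_marker :: "marker \<Rightarrow> bool" where
  "is_marker m \<longleftrightarrow> norm (snd m) = 1"

definition on_aligned :: "marker \<Rightarrow> pt set \<Rightarrow> pt set \<Rightarrow> bool" where
  "on_aligned m e Q \<longleftrightarrow> is_edge e Q \<and> fst m \<in> e \<and> outward_normal Q e (snd m)"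

definition consistent :: "pt set set \<Rightarrow> marker set \<Rightarrow> bool" where
  "consistent S M \<longleftrightarrow> (\<forall>m\<in>M. \<exists>Q\<in>S. \<exists>e. on_aligned m e Q)"

definition fully_consistent :: "pt set set \<Rightarrow> marker set \<Rightarrow> bool" where
  "fully_consistent S M \<longleftrightarrow> consistent S M \<and>
     (\<forall>Q\<in>S. \<forall>e. is_edge e Q \<longrightarrow> (\<exists>m\<in>M. on_aligned m e Q))"

definition disjoint_polygon_set :: "pt set set \<Rightarrow> bool" where
  "disjoint_polygon_set S \<longleftrightarrow> (\<forall>Q\<in>S. convex_polygon Q) \<and>
     (\<forall>Q\<in>S. \<forall>Q'\<in>S. Q \<noteq> Q' \<longrightarrow> Q \<inter> Q' = {})"

end

theory Submission
  imports Defs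
begin

lemma inner_v2: "(vector [a, b] :: real^2) \<bullet> vector [c, d] = a * c + b * d"
  by (simp add: inner_vec_def sum_2)

lemma v2_eq: "((vector [a, b] :: real^2) = vector [c, d]) \<longleftrightarrow> a = c \<and> b = d"
  by (simp add: vec_eq_iff forall_2)

lemma hull_le: fixes w :: "real^2"
  assumes "\<And>v. v \<in> S \<Longrightarrow> w \<bullet> v \<le> k" "x \<in> convex hull S" shows "w \<bullet> x \<le> k"
proof -
  have "convex hull S \<subseteq> {x. w \<bullet> x \<le> k}"
    by (rule hull_minimal) (use assms(1) convex_halfspace_le in auto)
  thus ?thesis using assms(2) by auto
qed

lemma hull_ge: fixes w :: "real^2"
  assumes "\<And>v. v \<in> S \<Longrightarrow> w \<bullet> v \<ge> k" "x \<in> convex hull S" shows "w \<bullet> x \<ge> k"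
proof -
  have "convex hull S \<subseteq> {x. w \<bullet> x \<ge> k}"
    by (rule hull_minimal) (use assms(1) convex_halfspace_ge in auto)
  thus ?thesis using assms(2) by auto
qed

lemma not_coll: fixes a b c w :: "real^2"
  assumes "a \<noteq> b" "w \<bullet> a = w \<bullet> b" "w \<bullet> c < w \<bullet> a"
  shows "\<not> affine_dependent {a,b,c}"
proof -
  have "\<not> collinear {a,b,c}"
  proof
    assume "collinear {a,b,c}"
    then obtain u where u: "\<forall>x\<in>{a,b,c}. \<forall>y\<in>{a,b,c}. \<exists>t. x - y = t *\<^sub>R u"
      unfolding collinear_def by blast
    then obtain s t where st: "a - b = s *\<^sub>R u" "c - a = t *\<^sub>R u" by blast
    have "s \<noteq> 0" using st assms(1) by auto
    have "w \<bullet> (a - b) = 0" using assms(2) by (simp add: inner_diff_right)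
    hence "s * (w \<bullet> u) = 0" using st by simp
    hence "w \<bullet> u = 0" using \<open>s\<noteq>0\<close> by simp
    hence "w \<bullet> (c - a) = 0" using st by simp
    thus False using assms(3) by (simp add: inner_diff_right)
  qed
  thus ?thesis using collinear_3_eq_affine_dependent by blast
qed

lemma tri_edges: fixes a b c :: "real^2"
  assumes ind: "\<not> affine_dependent {a,b,c}" and d: "a\<noteq>b" "a\<noteq>c" "b\<noteq>c"
  shows "is_edge e (convex hull {a,b,c}) \<longleftrightarrow>
     e = closed_segment a b \<or> e = closed_segment b c \<or> e = closed_segment a c"
proof
  assume "is_edge e (convex hull {a,b,c})"
  then obtain c' where c': "c' \<subseteq> {a,b,c}" "e = convex hull c'" and ad: "aff_dim e = 1"
    unfolding is_edge_def face_of_convex_hull_affine_independent[OF ind] by blast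
  have "\<not> affine_dependent c'" using affine_independent_subset[OF ind c'(1)] .
  hence "int (card c') = aff_dim c' + 1" by (rule aff_dim_affine_independent)
  moreover have "aff_dim c' = 1" using ad c'(2) by (simp add: aff_dim_convex_hull)
  ultimately have "int (card c') = 2" by simp
  hence "card c' = 2" by simp
  then obtain x y where xy: "c' = {x,y}" "x \<noteq> y" by (meson card_2_iff)
  have "x \<in> {a,b,c}" "y \<in> {a,b,c}" using c'(1) xy(1) by auto
  hence "c' = {a,b} \<or> c' = {b,c} \<or> c' = {a,c}"
    using xy(2) unfolding xy(1) by (auto simp: doubleton_eq_iff)
  thus "e = closed_segment a b \<or> e = closed_segment b c \<or> e = closed_segment a c"
    using c'(2) by (auto simp: segment_convex_hull)
next
  have A: "aff_dim (convex hull {x,y}) = 1" if "{x,y} \<subseteq> {a,b,c}" "x \<noteq> y" for x y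
  proof -
    have "\<not> affine_dependent {x,y}" using affine_independent_subset[OF ind that(1)] .
    hence "int (card {x,y}) = aff_dim {x,y} + 1" by (rule aff_dim_affine_independent)
    thus ?thesis using that(2) by (simp add: aff_dim_convex_hull)
  qed
  have B: "is_edge (closed_segment x y) (convex hull {a,b,c})" if "{x,y} \<subseteq> {a,b,c}" "x \<noteq> y" for x y
    unfolding is_edge_def face_of_convex_hull_affine_independent[OF ind] segment_convex_hull
  proof
    show "\<exists>c'. c' \<subseteq> {a, b, c} \<and> convex hull {x, y} = convex hull c'"
      using that(1) by blast
    show "aff_dim (convex hull {x, y}) = 1" using A[OF that] .
  qed
  assume "e = closed_segment a b \<or> e = closed_segment b c \<or> e = closed_segment a c"
  moreover have "is_edge (closed_segment a b) (convex hull {a,b,c})" by (rule B) (use d in auto)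
  moreover have "is_edge (closed_segment b c) (convex hull {a,b,c})" by (rule B) (use d in auto)
  moreover have "is_edge (closed_segment a c) (convex hull {a,b,c})" by (rule B) (use d in auto)
  ultimately show "is_edge e (convex hull {a,b,c})" by blast
qed

lemma tri_poly: fixes a b c :: "real^2"
  assumes ind: "\<not> affine_dependent {a,b,c}" and d: "a\<noteq>b" "a\<noteq>c" "b\<noteq>c"
  shows "convex_polygon (convex hull {a,b,c})"
  unfolding convex_polygon_def
proof
  show "polytope (convex hull {a,b,c})" by (simp add: polytope_convex_hull)
  have "int (card {a,b,c}) = aff_dim {a,b,c} + 1" using ind by (rule aff_dim_affine_independent)
  thus "aff_dim (convex hull {a,b,c}) = 2" using d by (simp add: aff_dim_convex_hull)
qed

lemma tri_onal_core: fixes x y z w p :: "real^2"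
  assumes ind: "\<not> affine_dependent {x,y,z}" and d: "x \<noteq> y"
    and w: "w \<bullet> x = w \<bullet> y" "w \<bullet> z < w \<bullet> x" and p: "p = x \<or> p = y"
  shows "on_aligned (p, w /\<^sub>R norm w) (closed_segment x y) (convex hull {x,y,z})"
proof -
  have wne: "w \<noteq> 0" using w by auto
  have "z \<noteq> x" "z \<noteq> y" using w by auto
  hence edge: "is_edge (closed_segment x y) (convex hull {x,y,z})"
    using tri_edges[OF ind] d by auto
  have pe: "p \<in> closed_segment x y" using p by auto
  have le: "w \<bullet> v \<le> w \<bullet> x" if "v \<in> convex hull {x,y,z}" for v
    by (rule hull_le[OF _ that]) (use w in auto)
  have eq: "w \<bullet> v = w \<bullet> x" if "v \<in> closed_segment x y" for v
  proof -
    have "v \<in> convex hull {x,y}" using that by (simp add: segment_convex_hull)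
    have "w \<bullet> v \<le> w \<bullet> x" by (rule hull_le[OF _ \<open>v \<in> convex hull {x,y}\<close>]) (use w in auto)
    moreover have "w \<bullet> v \<ge> w \<bullet> x" by (rule hull_ge[OF _ \<open>v \<in> convex hull {x,y}\<close>]) (use w in auto)
    ultimately show ?thesis by simp
  qed
  have "outward_normal (convex hull {x,y,z}) (closed_segment x y) (w /\<^sub>R norm w)"
    unfolding outward_normal_def
  proof (intro conjI ballI)
    show "norm (w /\<^sub>R norm w) = 1" using wne by simp
    fix v u assume vu: "v \<in> closed_segment x y" "u \<in> convex hull {x,y,z}"
    have "w \<bullet> u \<le> w \<bullet> x" using le[OF vu(2)] .
    moreover have "w \<bullet> v = w \<bullet> x" using eq[OF vu(1)] .
    ultimately have "w \<bullet> u \<le> w \<bullet> v" by linarith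
    hence "(w \<bullet> u) / norm w \<le> (w \<bullet> v) / norm w" by (rule divide_right_mono) simp
    thus "(w /\<^sub>R norm w) \<bullet> u \<le> (w /\<^sub>R norm w) \<bullet> v"
      by (simp add: divide_inverse_commute)
  qed
  thus ?thesis unfolding on_aligned_def using edge pe by simp
qed

lemma tri_onal_ab: fixes a b c w p :: "real^2"
  assumes "\<not> affine_dependent {a,b,c}" "a \<noteq> b" "w \<bullet> a = w \<bullet> b" "w \<bullet> c < w \<bullet> a" "p = a \<or> p = b"
  shows "on_aligned (p, w /\<^sub>R norm w) (closed_segment a b) (convex hull {a,b,c})"
  using tri_onal_core[OF assms] .

lemma tri_onal_bc: fixes a b c w p :: "real^2"
  assumes "\<not> affine_dependent {a,b,c}" "b \<noteq> c" "w \<bullet> b = w \<bullet> c" "w \<bullet> a < w \<bullet> b" "p = b \<or> p = c"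
  shows "on_aligned (p, w /\<^sub>R norm w) (closed_segment b c) (convex hull {a,b,c})"
proof -
  have e: "{b,c,a} = {a,b,c}" by blast
  show ?thesis using tri_onal_core[of b c a w p] assms unfolding e by blast
qed

lemma tri_onal_ac: fixes a b c w p :: "real^2"
  assumes "\<not> affine_dependent {a,b,c}" "a \<noteq> c" "w \<bullet> a = w \<bullet> c" "w \<bullet> b < w \<bullet> a" "p = a \<or> p = c"
  shows "on_aligned (p, w /\<^sub>R norm w) (closed_segment a c) (convex hull {a,b,c})"
proof -
  have e: "{a,c,b} = {a,b,c}" by blast
  show ?thesis using tri_onal_core[of a c b w p] assms unfolding e by blast
qed


definition mk :: "real^2 \<Rightarrow> real^2 \<Rightarrow> marker" where "mk p w = (p, w /\<^sub>R norm w)"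

lemma mk_marker: "(w::real^2) \<noteq> 0 \<Longrightarrow> is_marker (mk p w)"
  by (simp add: is_marker_def mk_def)

lemma sep: fixes s :: "real^2"
  assumes "\<And>v. v \<in> A \<Longrightarrow> s \<bullet> v \<le> k" "\<And>v. v \<in> B \<Longrightarrow> s \<bullet> v \<ge> k'" "k < k'"
  shows "convex hull A \<inter> convex hull B = {}"
proof (rule ccontr)
  assume "convex hull A \<inter> convex hull B \<noteq> {}"
  then obtain x where "x \<in> convex hull A" "x \<in> convex hull B" by blast
  hence "s \<bullet> x \<le> k" "s \<bullet> x \<ge> k'" using hull_le[OF assms(1)] hull_ge[OF assms(2)] by auto
  thus False using assms(3) by linarith
qed

lemma hull_neq: fixes s :: "real^2"
  assumes "p \<in> A" "\<And>v. v \<in> B \<Longrightarrow> s \<bullet> v \<le> k" "s \<bullet> p > k"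
  shows "convex hull A \<noteq> convex hull B"
proof
  assume "convex hull A = convex hull B"
  moreover have "p \<in> convex hull A" using assms(1) by (rule hull_inc)
  ultimately have "s \<bullet> p \<le> k" using hull_le[OF assms(2)] by auto
  thus False using assms(3) by linarith
qed

definition T1 :: "pt set" where "T1 = convex hull {vector [-4, -4], vector [0, -2], vector [-3, -2]}"

lemma T1_ind: "\<not> affine_dependent {vector [-4, -4], vector [0, -2], vector [-3, -2] :: real^2}"
  by (rule not_coll[where w="vector [1, -2]"]) (simp_all add: v2_eq inner_v2)

lemma T1_d: "vector [-4, -4] \<noteq> (vector [0, -2] :: real^2)" "vector [-4, -4] \<noteq> (vector [-3, -2] :: real^2)" "vector [0, -2] \<noteq> (vector [-3, -2] :: real^2)"
  by (simp_all add: v2_eq)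

lemma T1_poly: "convex_polygon T1"
  unfolding T1_def by (rule tri_poly[OF T1_ind T1_d])

lemma T1_edges: "is_edge e T1 \<longleftrightarrow> e = closed_segment (vector [-4, -4]) (vector [0, -2]) \<or> e = closed_segment (vector [0, -2]) (vector [-3, -2]) \<or> e = closed_segment (vector [-4, -4]) (vector [-3, -2])"
  unfolding T1_def by (rule tri_edges[OF T1_ind T1_d])

lemma T1_oa_0_0: "on_aligned (mk (vector [-4, -4]) (vector [1, -2])) (closed_segment (vector [-4, -4]) (vector [0, -2])) T1"
  unfolding T1_def mk_def by (rule tri_onal_ab[OF T1_ind]) (simp_all add: v2_eq inner_v2)

lemma T1_oa_1_1: "on_aligned (mk (vector [0, -2]) (vector [0, 1])) (closed_segment (vector [0, -2]) (vector [-3, -2])) T1"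
  unfolding T1_def mk_def by (rule tri_onal_bc[OF T1_ind]) (simp_all add: v2_eq inner_v2)

lemma T1_oa_2_2: "on_aligned (mk (vector [-4, -4]) (vector [-2, 1])) (closed_segment (vector [-4, -4]) (vector [-3, -2])) T1"
  unfolding T1_def mk_def by (rule tri_onal_ac[OF T1_ind]) (simp_all add: v2_eq inner_v2)

definition T2 :: "pt set" where "T2 = convex hull {vector [4, -4], vector [2, 0], vector [2, -3]}"

lemma T2_ind: "\<not> affine_dependent {vector [4, -4], vector [2, 0], vector [2, -3] :: real^2}"
  by (rule not_coll[where w="vector [2, 1]"]) (simp_all add: v2_eq inner_v2)

lemma T2_d: "vector [4, -4] \<noteq> (vector [2, 0] :: real^2)" "vector [4, -4] \<noteq> (vector [2, -3] :: real^2)" "vector [2, 0] \<noteq> (vector [2, -3] :: real^2)"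
  by (simp_all add: v2_eq)

lemma T2_poly: "convex_polygon T2"
  unfolding T2_def by (rule tri_poly[OF T2_ind T2_d])

lemma T2_edges: "is_edge e T2 \<longleftrightarrow> e = closed_segment (vector [4, -4]) (vector [2, 0]) \<or> e = closed_segment (vector [2, 0]) (vector [2, -3]) \<or> e = closed_segment (vector [4, -4]) (vector [2, -3])"
  unfolding T2_def by (rule tri_edges[OF T2_ind T2_d])

lemma T2_oa_0_3: "on_aligned (mk (vector [4, -4]) (vector [2, 1])) (closed_segment (vector [4, -4]) (vector [2, 0])) T2"
  unfolding T2_def mk_def by (rule tri_onal_ab[OF T2_ind]) (simp_all add: v2_eq inner_v2)

lemma T2_oa_1_4: "on_aligned (mk (vector [2, 0]) (vector [-1, 0])) (closed_segment (vector [2, 0]) (vector [2, -3])) T2"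
  unfolding T2_def mk_def by (rule tri_onal_bc[OF T2_ind]) (simp_all add: v2_eq inner_v2)

lemma T2_oa_2_5: "on_aligned (mk (vector [4, -4]) (vector [-1, -2])) (closed_segment (vector [4, -4]) (vector [2, -3])) T2"
  unfolding T2_def mk_def by (rule tri_onal_ac[OF T2_ind]) (simp_all add: v2_eq inner_v2)

definition T3 :: "pt set" where "T3 = convex hull {vector [4, 4], vector [0, 2], vector [3, 2]}"

lemma T3_ind: "\<not> affine_dependent {vector [4, 4], vector [0, 2], vector [3, 2] :: real^2}"
  by (rule not_coll[where w="vector [-1, 2]"]) (simp_all add: v2_eq inner_v2)

lemma T3_d: "vector [4, 4] \<noteq> (vector [0, 2] :: real^2)" "vector [4, 4] \<noteq> (vector [3, 2] :: real^2)" "vector [0, 2] \<noteq> (vector [3, 2] :: real^2)"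
  by (simp_all add: v2_eq)

lemma T3_poly: "convex_polygon T3"
  unfolding T3_def by (rule tri_poly[OF T3_ind T3_d])

lemma T3_edges: "is_edge e T3 \<longleftrightarrow> e = closed_segment (vector [4, 4]) (vector [0, 2]) \<or> e = closed_segment (vector [0, 2]) (vector [3, 2]) \<or> e = closed_segment (vector [4, 4]) (vector [3, 2])"
  unfolding T3_def by (rule tri_edges[OF T3_ind T3_d])

lemma T3_oa_0_6: "on_aligned (mk (vector [4, 4]) (vector [-1, 2])) (closed_segment (vector [4, 4]) (vector [0, 2])) T3"
  unfolding T3_def mk_def by (rule tri_onal_ab[OF T3_ind]) (simp_all add: v2_eq inner_v2)

lemma T3_oa_1_7: "on_aligned (mk (vector [0, 2]) (vector [0, -1])) (closed_segment (vector [0, 2]) (vector [3, 2])) T3"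
  unfolding T3_def mk_def by (rule tri_onal_bc[OF T3_ind]) (simp_all add: v2_eq inner_v2)

lemma T3_oa_2_8: "on_aligned (mk (vector [4, 4]) (vector [2, -1])) (closed_segment (vector [4, 4]) (vector [3, 2])) T3"
  unfolding T3_def mk_def by (rule tri_onal_ac[OF T3_ind]) (simp_all add: v2_eq inner_v2)

definition T4 :: "pt set" where "T4 = convex hull {vector [-4, 4], vector [-2, 0], vector [-2, 3]}"

lemma T4_ind: "\<not> affine_dependent {vector [-4, 4], vector [-2, 0], vector [-2, 3] :: real^2}"
  by (rule not_coll[where w="vector [-2, -1]"]) (simp_all add: v2_eq inner_v2)

lemma T4_d: "vector [-4, 4] \<noteq> (vector [-2, 0] :: real^2)" "vector [-4, 4] \<noteq> (vector [-2, 3] :: real^2)" "vector [-2, 0] \<noteq> (vector [-2, 3] :: real^2)"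
  by (simp_all add: v2_eq)

lemma T4_poly: "convex_polygon T4"
  unfolding T4_def by (rule tri_poly[OF T4_ind T4_d])

lemma T4_edges: "is_edge e T4 \<longleftrightarrow> e = closed_segment (vector [-4, 4]) (vector [-2, 0]) \<or> e = closed_segment (vector [-2, 0]) (vector [-2, 3]) \<or> e = closed_segment (vector [-4, 4]) (vector [-2, 3])"
  unfolding T4_def by (rule tri_edges[OF T4_ind T4_d])

lemma T4_oa_0_9: "on_aligned (mk (vector [-4, 4]) (vector [-2, -1])) (closed_segment (vector [-4, 4]) (vector [-2, 0])) T4"
  unfolding T4_def mk_def by (rule tri_onal_ab[OF T4_ind]) (simp_all add: v2_eq inner_v2)

lemma T4_oa_1_10: "on_aligned (mk (vector [-2, 0]) (vector [1, 0])) (closed_segment (vector [-2, 0]) (vector [-2, 3])) T4"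
  unfolding T4_def mk_def by (rule tri_onal_bc[OF T4_ind]) (simp_all add: v2_eq inner_v2)

lemma T4_oa_2_11: "on_aligned (mk (vector [-4, 4]) (vector [1, 2])) (closed_segment (vector [-4, 4]) (vector [-2, 3])) T4"
  unfolding T4_def mk_def by (rule tri_onal_ac[OF T4_ind]) (simp_all add: v2_eq inner_v2)

definition U1 :: "pt set" where "U1 = convex hull {vector [4, -4], vector [0, -2], vector [3, -2]}"

lemma U1_ind: "\<not> affine_dependent {vector [4, -4], vector [0, -2], vector [3, -2] :: real^2}"
  by (rule not_coll[where w="vector [-1, -2]"]) (simp_all add: v2_eq inner_v2)

lemma U1_d: "vector [4, -4] \<noteq> (vector [0, -2] :: real^2)" "vector [4, -4] \<noteq> (vector [3, -2] :: real^2)" "vector [0, -2] \<noteq> (vector [3, -2] :: real^2)"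
  by (simp_all add: v2_eq)

lemma U1_poly: "convex_polygon U1"
  unfolding U1_def by (rule tri_poly[OF U1_ind U1_d])

lemma U1_edges: "is_edge e U1 \<longleftrightarrow> e = closed_segment (vector [4, -4]) (vector [0, -2]) \<or> e = closed_segment (vector [0, -2]) (vector [3, -2]) \<or> e = closed_segment (vector [4, -4]) (vector [3, -2])"
  unfolding U1_def by (rule tri_edges[OF U1_ind U1_d])

lemma U1_oa_0_5: "on_aligned (mk (vector [4, -4]) (vector [-1, -2])) (closed_segment (vector [4, -4]) (vector [0, -2])) U1"
  unfolding U1_def mk_def by (rule tri_onal_ab[OF U1_ind]) (simp_all add: v2_eq inner_v2)

lemma U1_oa_1_1: "on_aligned (mk (vector [0, -2]) (vector [0, 1])) (closed_segment (vector [0, -2]) (vector [3, -2])) U1"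
  unfolding U1_def mk_def by (rule tri_onal_bc[OF U1_ind]) (simp_all add: v2_eq inner_v2)

lemma U1_oa_2_3: "on_aligned (mk (vector [4, -4]) (vector [2, 1])) (closed_segment (vector [4, -4]) (vector [3, -2])) U1"
  unfolding U1_def mk_def by (rule tri_onal_ac[OF U1_ind]) (simp_all add: v2_eq inner_v2)

definition U2 :: "pt set" where "U2 = convex hull {vector [-4, -4], vector [-2, 0], vector [-2, -3]}"

lemma U2_ind: "\<not> affine_dependent {vector [-4, -4], vector [-2, 0], vector [-2, -3] :: real^2}"
  by (rule not_coll[where w="vector [-2, 1]"]) (simp_all add: v2_eq inner_v2)

lemma U2_d: "vector [-4, -4] \<noteq> (vector [-2, 0] :: real^2)" "vector [-4, -4] \<noteq> (vector [-2, -3] :: real^2)" "vector [-2, 0] \<noteq> (vector [-2, -3] :: real^2)"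
  by (simp_all add: v2_eq)

lemma U2_poly: "convex_polygon U2"
  unfolding U2_def by (rule tri_poly[OF U2_ind U2_d])

lemma U2_edges: "is_edge e U2 \<longleftrightarrow> e = closed_segment (vector [-4, -4]) (vector [-2, 0]) \<or> e = closed_segment (vector [-2, 0]) (vector [-2, -3]) \<or> e = closed_segment (vector [-4, -4]) (vector [-2, -3])"
  unfolding U2_def by (rule tri_edges[OF U2_ind U2_d])

lemma U2_oa_0_2: "on_aligned (mk (vector [-4, -4]) (vector [-2, 1])) (closed_segment (vector [-4, -4]) (vector [-2, 0])) U2"
  unfolding U2_def mk_def by (rule tri_onal_ab[OF U2_ind]) (simp_all add: v2_eq inner_v2)

lemma U2_oa_1_10: "on_aligned (mk (vector [-2, 0]) (vector [1, 0])) (closed_segment (vector [-2, 0]) (vector [-2, -3])) U2"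
  unfolding U2_def mk_def by (rule tri_onal_bc[OF U2_ind]) (simp_all add: v2_eq inner_v2)

lemma U2_oa_2_0: "on_aligned (mk (vector [-4, -4]) (vector [1, -2])) (closed_segment (vector [-4, -4]) (vector [-2, -3])) U2"
  unfolding U2_def mk_def by (rule tri_onal_ac[OF U2_ind]) (simp_all add: v2_eq inner_v2)

definition U3 :: "pt set" where "U3 = convex hull {vector [-4, 4], vector [0, 2], vector [-3, 2]}"

lemma U3_ind: "\<not> affine_dependent {vector [-4, 4], vector [0, 2], vector [-3, 2] :: real^2}"
  by (rule not_coll[where w="vector [1, 2]"]) (simp_all add: v2_eq inner_v2)

lemma U3_d: "vector [-4, 4] \<noteq> (vector [0, 2] :: real^2)" "vector [-4, 4] \<noteq> (vector [-3, 2] :: real^2)" "vector [0, 2] \<noteq> (vector [-3, 2] :: real^2)"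
  by (simp_all add: v2_eq)

lemma U3_poly: "convex_polygon U3"
  unfolding U3_def by (rule tri_poly[OF U3_ind U3_d])

lemma U3_edges: "is_edge e U3 \<longleftrightarrow> e = closed_segment (vector [-4, 4]) (vector [0, 2]) \<or> e = closed_segment (vector [0, 2]) (vector [-3, 2]) \<or> e = closed_segment (vector [-4, 4]) (vector [-3, 2])"
  unfolding U3_def by (rule tri_edges[OF U3_ind U3_d])

lemma U3_oa_0_11: "on_aligned (mk (vector [-4, 4]) (vector [1, 2])) (closed_segment (vector [-4, 4]) (vector [0, 2])) U3"
  unfolding U3_def mk_def by (rule tri_onal_ab[OF U3_ind]) (simp_all add: v2_eq inner_v2)

lemma U3_oa_1_7: "on_aligned (mk (vector [0, 2]) (vector [0, -1])) (closed_segment (vector [0, 2]) (vector [-3, 2])) U3"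
  unfolding U3_def mk_def by (rule tri_onal_bc[OF U3_ind]) (simp_all add: v2_eq inner_v2)

lemma U3_oa_2_9: "on_aligned (mk (vector [-4, 4]) (vector [-2, -1])) (closed_segment (vector [-4, 4]) (vector [-3, 2])) U3"
  unfolding U3_def mk_def by (rule tri_onal_ac[OF U3_ind]) (simp_all add: v2_eq inner_v2)

definition U4 :: "pt set" where "U4 = convex hull {vector [4, 4], vector [2, 0], vector [2, 3]}"

lemma U4_ind: "\<not> affine_dependent {vector [4, 4], vector [2, 0], vector [2, 3] :: real^2}"
  by (rule not_coll[where w="vector [2, -1]"]) (simp_all add: v2_eq inner_v2)

lemma U4_d: "vector [4, 4] \<noteq> (vector [2, 0] :: real^2)" "vector [4, 4] \<noteq> (vector [2, 3] :: real^2)" "vector [2, 0] \<noteq> (vector [2, 3] :: real^2)"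
  by (simp_all add: v2_eq)

lemma U4_poly: "convex_polygon U4"
  unfolding U4_def by (rule tri_poly[OF U4_ind U4_d])

lemma U4_edges: "is_edge e U4 \<longleftrightarrow> e = closed_segment (vector [4, 4]) (vector [2, 0]) \<or> e = closed_segment (vector [2, 0]) (vector [2, 3]) \<or> e = closed_segment (vector [4, 4]) (vector [2, 3])"
  unfolding U4_def by (rule tri_edges[OF U4_ind U4_d])

lemma U4_oa_0_8: "on_aligned (mk (vector [4, 4]) (vector [2, -1])) (closed_segment (vector [4, 4]) (vector [2, 0])) U4"
  unfolding U4_def mk_def by (rule tri_onal_ab[OF U4_ind]) (simp_all add: v2_eq inner_v2)

lemma U4_oa_1_4: "on_aligned (mk (vector [2, 0]) (vector [-1, 0])) (closed_segment (vector [2, 0]) (vector [2, 3])) U4"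
  unfolding U4_def mk_def by (rule tri_onal_bc[OF U4_ind]) (simp_all add: v2_eq inner_v2)

lemma U4_oa_2_6: "on_aligned (mk (vector [4, 4]) (vector [-1, 2])) (closed_segment (vector [4, 4]) (vector [2, 3])) U4"
  unfolding U4_def mk_def by (rule tri_onal_ac[OF U4_ind]) (simp_all add: v2_eq inner_v2)

lemma disj_T1_T2: "T1 \<inter> T2 = {}"
  unfolding T1_def T2_def by (rule sep[where s="vector [1, 0]" and k="0" and k'="2"], auto simp: inner_v2)

lemma disj_T2_T1: "T2 \<inter> T1 = {}"
  using disj_T1_T2 by (simp add: Int_commute)

lemma disj_T1_T3: "T1 \<inter> T3 = {}"
  unfolding T1_def T3_def by (rule sep[where s="vector [0, 1]" and k="-2" and k'="2"], auto simp: inner_v2)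

lemma disj_T3_T1: "T3 \<inter> T1 = {}"
  using disj_T1_T3 by (simp add: Int_commute)

lemma disj_T1_T4: "T1 \<inter> T4 = {}"
  unfolding T1_def T4_def by (rule sep[where s="vector [0, 1]" and k="-2" and k'="0"], auto simp: inner_v2)

lemma disj_T4_T1: "T4 \<inter> T1 = {}"
  using disj_T1_T4 by (simp add: Int_commute)

lemma disj_T2_T3: "T2 \<inter> T3 = {}"
  unfolding T2_def T3_def by (rule sep[where s="vector [0, 1]" and k="0" and k'="2"], auto simp: inner_v2)

lemma disj_T3_T2: "T3 \<inter> T2 = {}"
  using disj_T2_T3 by (simp add: Int_commute)

lemma disj_T2_T4: "T2 \<inter> T4 = {}"
  unfolding T2_def T4_def by (rule sep[where s="vector [-1, 0]" and k="-2" and k'="2"], auto simp: inner_v2)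

lemma disj_T4_T2: "T4 \<inter> T2 = {}"
  using disj_T2_T4 by (simp add: Int_commute)

lemma disj_T3_T4: "T3 \<inter> T4 = {}"
  unfolding T3_def T4_def by (rule sep[where s="vector [-1, 0]" and k="0" and k'="2"], auto simp: inner_v2)

lemma disj_T4_T3: "T4 \<inter> T3 = {}"
  using disj_T3_T4 by (simp add: Int_commute)

lemma disj_U1_U2: "U1 \<inter> U2 = {}"
  unfolding U1_def U2_def by (rule sep[where s="vector [-1, 0]" and k="0" and k'="2"], auto simp: inner_v2)

lemma disj_U2_U1: "U2 \<inter> U1 = {}"
  using disj_U1_U2 by (simp add: Int_commute)

lemma disj_U1_U3: "U1 \<inter> U3 = {}"
  unfolding U1_def U3_def by (rule sep[where s="vector [0, 1]" and k="-2" and k'="2"], auto simp: inner_v2)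

lemma disj_U3_U1: "U3 \<inter> U1 = {}"
  using disj_U1_U3 by (simp add: Int_commute)

lemma disj_U1_U4: "U1 \<inter> U4 = {}"
  unfolding U1_def U4_def by (rule sep[where s="vector [0, 1]" and k="-2" and k'="0"], auto simp: inner_v2)

lemma disj_U4_U1: "U4 \<inter> U1 = {}"
  using disj_U1_U4 by (simp add: Int_commute)

lemma disj_U2_U3: "U2 \<inter> U3 = {}"
  unfolding U2_def U3_def by (rule sep[where s="vector [0, 1]" and k="0" and k'="2"], auto simp: inner_v2)

lemma disj_U3_U2: "U3 \<inter> U2 = {}"
  using disj_U2_U3 by (simp add: Int_commute)

lemma disj_U2_U4: "U2 \<inter> U4 = {}"
  unfolding U2_def U4_def by (rule sep[where s="vector [1, 0]" and k="-2" and k'="2"], auto simp: inner_v2)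

lemma disj_U4_U2: "U4 \<inter> U2 = {}"
  using disj_U2_U4 by (simp add: Int_commute)

lemma disj_U3_U4: "U3 \<inter> U4 = {}"
  unfolding U3_def U4_def by (rule sep[where s="vector [1, 0]" and k="0" and k'="2"], auto simp: inner_v2)

lemma disj_U4_U3: "U4 \<inter> U3 = {}"
  using disj_U3_U4 by (simp add: Int_commute)

lemma neq_U1_T1: "U1 \<noteq> T1"
  unfolding U1_def T1_def by (rule hull_neq[where p="vector [4, -4]" and s="vector [1, 0]" and k="0"], auto simp: inner_v2)

lemma neq_U1_T2: "U1 \<noteq> T2"
  unfolding U1_def T2_def by (rule hull_neq[where p="vector [0, -2]" and s="vector [-1, 0]" and k="-2"], auto simp: inner_v2)

lemma neq_U1_T3: "U1 \<noteq> T3"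
  unfolding U1_def T3_def by (rule hull_neq[where p="vector [4, -4]" and s="vector [0, -1]" and k="-2"], auto simp: inner_v2)

lemma neq_U1_T4: "U1 \<noteq> T4"
  unfolding U1_def T4_def by (rule hull_neq[where p="vector [4, -4]" and s="vector [1, 0]" and k="-2"], auto simp: inner_v2)

definition Mset :: "marker set" where "Mset = {mk (vector [-4, -4]) (vector [1, -2]), mk (vector [0, -2]) (vector [0, 1]), mk (vector [-4, -4]) (vector [-2, 1]), mk (vector [4, -4]) (vector [2, 1]), mk (vector [2, 0]) (vector [-1, 0]), mk (vector [4, -4]) (vector [-1, -2]), mk (vector [4, 4]) (vector [-1, 2]), mk (vector [0, 2]) (vector [0, -1]), mk (vector [4, 4]) (vector [2, -1]), mk (vector [-4, 4]) (vector [-2, -1]), mk (vector [-2, 0]) (vector [1, 0]), mk (vector [-4, 4]) (vector [1, 2])}"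

theorem mainTheorem15:
  shows "\<exists>S S' M. finite S \<and> finite S' \<and> S \<noteq> S' \<and> finite M \<and>
    (\<forall>m\<in>M. is_marker m) \<and>
    disjoint_polygon_set S \<and> disjoint_polygon_set S' \<and>
    fully_consistent S M \<and> fully_consistent S' M"
proof -
  have ne: "{T1, T2, T3, T4} \<noteq> {U1, U2, U3, U4}"
  proof
    assume "{T1, T2, T3, T4} = {U1, U2, U3, U4}"
    hence "U1 \<in> {T1, T2, T3, T4}" by simp
    thus False using neq_U1_T1 neq_U1_T2 neq_U1_T3 neq_U1_T4 by auto
  qed
  have mk: "\<forall>m\<in>Mset. is_marker m"
    unfolding Mset_def by (auto intro!: mk_marker simp: vec_eq_iff forall_2)
  have dS: "disjoint_polygon_set {T1, T2, T3, T4}"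
    unfolding disjoint_polygon_set_def using T1_poly T2_poly T3_poly T4_poly U1_poly U2_poly U3_poly U4_poly disj_T2_T1 disj_T1_T2 disj_T3_T1 disj_T1_T3 disj_T4_T1 disj_T1_T4 disj_T3_T2 disj_T2_T3 disj_T4_T2 disj_T2_T4 disj_T4_T3 disj_T3_T4 disj_U2_U1 disj_U1_U2 disj_U3_U1 disj_U1_U3 disj_U4_U1 disj_U1_U4 disj_U3_U2 disj_U2_U3 disj_U4_U2 disj_U2_U4 disj_U4_U3 disj_U3_U4 by auto
  have dS': "disjoint_polygon_set {U1, U2, U3, U4}"
    unfolding disjoint_polygon_set_def using T1_poly T2_poly T3_poly T4_poly U1_poly U2_poly U3_poly U4_poly disj_T2_T1 disj_T1_T2 disj_T3_T1 disj_T1_T3 disj_T4_T1 disj_T1_T4 disj_T3_T2 disj_T2_T3 disj_T4_T2 disj_T2_T4 disj_T4_T3 disj_T3_T4 disj_U2_U1 disj_U1_U2 disj_U3_U1 disj_U1_U3 disj_U4_U1 disj_U1_U4 disj_U3_U2 disj_U2_U3 disj_U4_U2 disj_U2_U4 disj_U4_U3 disj_U3_U4 by auto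
  have cS0: "\<exists>Q\<in>{T1, T2, T3, T4}. \<exists>e. on_aligned (mk (vector [-4, -4]) (vector [1, -2])) e Q" using T1_oa_0_0 by blast
  have cS1: "\<exists>Q\<in>{T1, T2, T3, T4}. \<exists>e. on_aligned (mk (vector [0, -2]) (vector [0, 1])) e Q" using T1_oa_1_1 by blast
  have cS2: "\<exists>Q\<in>{T1, T2, T3, T4}. \<exists>e. on_aligned (mk (vector [-4, -4]) (vector [-2, 1])) e Q" using T1_oa_2_2 by blast
  have cS3: "\<exists>Q\<in>{T1, T2, T3, T4}. \<exists>e. on_aligned (mk (vector [4, -4]) (vector [2, 1])) e Q" using T2_oa_0_3 by blast
  have cS4: "\<exists>Q\<in>{T1, T2, T3, T4}. \<exists>e. on_aligned (mk (vector [2, 0]) (vector [-1, 0])) e Q" using T2_oa_1_4 by blast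
  have cS5: "\<exists>Q\<in>{T1, T2, T3, T4}. \<exists>e. on_aligned (mk (vector [4, -4]) (vector [-1, -2])) e Q" using T2_oa_2_5 by blast
  have cS6: "\<exists>Q\<in>{T1, T2, T3, T4}. \<exists>e. on_aligned (mk (vector [4, 4]) (vector [-1, 2])) e Q" using T3_oa_0_6 by blast
  have cS7: "\<exists>Q\<in>{T1, T2, T3, T4}. \<exists>e. on_aligned (mk (vector [0, 2]) (vector [0, -1])) e Q" using T3_oa_1_7 by blast
  have cS8: "\<exists>Q\<in>{T1, T2, T3, T4}. \<exists>e. on_aligned (mk (vector [4, 4]) (vector [2, -1])) e Q" using T3_oa_2_8 by blast
  have cS9: "\<exists>Q\<in>{T1, T2, T3, T4}. \<exists>e. on_aligned (mk (vector [-4, 4]) (vector [-2, -1])) e Q" using T4_oa_0_9 by blast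
  have cS10: "\<exists>Q\<in>{T1, T2, T3, T4}. \<exists>e. on_aligned (mk (vector [-2, 0]) (vector [1, 0])) e Q" using T4_oa_1_10 by blast
  have cS11: "\<exists>Q\<in>{T1, T2, T3, T4}. \<exists>e. on_aligned (mk (vector [-4, 4]) (vector [1, 2])) e Q" using T4_oa_2_11 by blast
  have consS: "consistent {T1, T2, T3, T4} Mset"
    unfolding consistent_def Mset_def using cS0 cS1 cS2 cS3 cS4 cS5 cS6 cS7 cS8 cS9 cS10 cS11 by (simp only: ball_simps)
  have cov_T1: "\<forall>e. is_edge e T1 \<longrightarrow> (\<exists>m\<in>Mset. on_aligned m e T1)"
  proof (intro allI impI)
    fix e assume "is_edge e T1"
    hence "e = closed_segment (vector [-4, -4]) (vector [0, -2]) \<or> e = closed_segment (vector [0, -2]) (vector [-3, -2]) \<or> e = closed_segment (vector [-4, -4]) (vector [-3, -2])" by (simp only: T1_edges)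
    thus "\<exists>m\<in>Mset. on_aligned m e T1" using T1_oa_0_0 T1_oa_1_1 T1_oa_2_2 unfolding Mset_def by blast
  qed
  have cov_T2: "\<forall>e. is_edge e T2 \<longrightarrow> (\<exists>m\<in>Mset. on_aligned m e T2)"
  proof (intro allI impI)
    fix e assume "is_edge e T2"
    hence "e = closed_segment (vector [4, -4]) (vector [2, 0]) \<or> e = closed_segment (vector [2, 0]) (vector [2, -3]) \<or> e = closed_segment (vector [4, -4]) (vector [2, -3])" by (simp only: T2_edges)
    thus "\<exists>m\<in>Mset. on_aligned m e T2" using T2_oa_0_3 T2_oa_1_4 T2_oa_2_5 unfolding Mset_def by blast
  qed
  have cov_T3: "\<forall>e. is_edge e T3 \<longrightarrow> (\<exists>m\<in>Mset. on_aligned m e T3)"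
  proof (intro allI impI)
    fix e assume "is_edge e T3"
    hence "e = closed_segment (vector [4, 4]) (vector [0, 2]) \<or> e = closed_segment (vector [0, 2]) (vector [3, 2]) \<or> e = closed_segment (vector [4, 4]) (vector [3, 2])" by (simp only: T3_edges)
    thus "\<exists>m\<in>Mset. on_aligned m e T3" using T3_oa_0_6 T3_oa_1_7 T3_oa_2_8 unfolding Mset_def by blast
  qed
  have cov_T4: "\<forall>e. is_edge e T4 \<longrightarrow> (\<exists>m\<in>Mset. on_aligned m e T4)"
  proof (intro allI impI)
    fix e assume "is_edge e T4"
    hence "e = closed_segment (vector [-4, 4]) (vector [-2, 0]) \<or> e = closed_segment (vector [-2, 0]) (vector [-2, 3]) \<or> e = closed_segment (vector [-4, 4]) (vector [-2, 3])" by (simp only: T4_edges)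
    thus "\<exists>m\<in>Mset. on_aligned m e T4" using T4_oa_0_9 T4_oa_1_10 T4_oa_2_11 unfolding Mset_def by blast
  qed
  have fcS: "fully_consistent {T1, T2, T3, T4} Mset"
    unfolding fully_consistent_def using consS cov_T1 cov_T2 cov_T3 cov_T4 by blast
  have cP0: "\<exists>Q\<in>{U1, U2, U3, U4}. \<exists>e. on_aligned (mk (vector [-4, -4]) (vector [1, -2])) e Q" using U2_oa_2_0 by blast
  have cP1: "\<exists>Q\<in>{U1, U2, U3, U4}. \<exists>e. on_aligned (mk (vector [0, -2]) (vector [0, 1])) e Q" using U1_oa_1_1 by blast
  have cP2: "\<exists>Q\<in>{U1, U2, U3, U4}. \<exists>e. on_aligned (mk (vector [-4, -4]) (vector [-2, 1])) e Q" using U2_oa_0_2 by blast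
  have cP3: "\<exists>Q\<in>{U1, U2, U3, U4}. \<exists>e. on_aligned (mk (vector [4, -4]) (vector [2, 1])) e Q" using U1_oa_2_3 by blast
  have cP4: "\<exists>Q\<in>{U1, U2, U3, U4}. \<exists>e. on_aligned (mk (vector [2, 0]) (vector [-1, 0])) e Q" using U4_oa_1_4 by blast
  have cP5: "\<exists>Q\<in>{U1, U2, U3, U4}. \<exists>e. on_aligned (mk (vector [4, -4]) (vector [-1, -2])) e Q" using U1_oa_0_5 by blast
  have cP6: "\<exists>Q\<in>{U1, U2, U3, U4}. \<exists>e. on_aligned (mk (vector [4, 4]) (vector [-1, 2])) e Q" using U4_oa_2_6 by blast
  have cP7: "\<exists>Q\<in>{U1, U2, U3, U4}. \<exists>e. on_aligned (mk (vector [0, 2]) (vector [0, -1])) e Q" using U3_oa_1_7 by blast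
  have cP8: "\<exists>Q\<in>{U1, U2, U3, U4}. \<exists>e. on_aligned (mk (vector [4, 4]) (vector [2, -1])) e Q" using U4_oa_0_8 by blast
  have cP9: "\<exists>Q\<in>{U1, U2, U3, U4}. \<exists>e. on_aligned (mk (vector [-4, 4]) (vector [-2, -1])) e Q" using U3_oa_2_9 by blast
  have cP10: "\<exists>Q\<in>{U1, U2, U3, U4}. \<exists>e. on_aligned (mk (vector [-2, 0]) (vector [1, 0])) e Q" using U2_oa_1_10 by blast
  have cP11: "\<exists>Q\<in>{U1, U2, U3, U4}. \<exists>e. on_aligned (mk (vector [-4, 4]) (vector [1, 2])) e Q" using U3_oa_0_11 by blast
  have consP: "consistent {U1, U2, U3, U4} Mset"
    unfolding consistent_def Mset_def using cP0 cP1 cP2 cP3 cP4 cP5 cP6 cP7 cP8 cP9 cP10 cP11 by (simp only: ball_simps)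
  have cov_U1: "\<forall>e. is_edge e U1 \<longrightarrow> (\<exists>m\<in>Mset. on_aligned m e U1)"
  proof (intro allI impI)
    fix e assume "is_edge e U1"
    hence "e = closed_segment (vector [4, -4]) (vector [0, -2]) \<or> e = closed_segment (vector [0, -2]) (vector [3, -2]) \<or> e = closed_segment (vector [4, -4]) (vector [3, -2])" by (simp only: U1_edges)
    thus "\<exists>m\<in>Mset. on_aligned m e U1" using U1_oa_0_5 U1_oa_1_1 U1_oa_2_3 unfolding Mset_def by blast
  qed
  have cov_U2: "\<forall>e. is_edge e U2 \<longrightarrow> (\<exists>m\<in>Mset. on_aligned m e U2)"
  proof (intro allI impI)
    fix e assume "is_edge e U2"
    hence "e = closed_segment (vector [-4, -4]) (vector [-2, 0]) \<or> e = closed_segment (vector [-2, 0]) (vector [-2, -3]) \<or> e = closed_segment (vector [-4, -4]) (vector [-2, -3])" by (simp only: U2_edges)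
    thus "\<exists>m\<in>Mset. on_aligned m e U2" using U2_oa_0_2 U2_oa_1_10 U2_oa_2_0 unfolding Mset_def by blast
  qed
  have cov_U3: "\<forall>e. is_edge e U3 \<longrightarrow> (\<exists>m\<in>Mset. on_aligned m e U3)"
  proof (intro allI impI)
    fix e assume "is_edge e U3"
    hence "e = closed_segment (vector [-4, 4]) (vector [0, 2]) \<or> e = closed_segment (vector [0, 2]) (vector [-3, 2]) \<or> e = closed_segment (vector [-4, 4]) (vector [-3, 2])" by (simp only: U3_edges)
    thus "\<exists>m\<in>Mset. on_aligned m e U3" using U3_oa_0_11 U3_oa_1_7 U3_oa_2_9 unfolding Mset_def by blast
  qed
  have cov_U4: "\<forall>e. is_edge e U4 \<longrightarrow> (\<exists>m\<in>Mset. on_aligned m e U4)"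
  proof (intro allI impI)
    fix e assume "is_edge e U4"
    hence "e = closed_segment (vector [4, 4]) (vector [2, 0]) \<or> e = closed_segment (vector [2, 0]) (vector [2, 3]) \<or> e = closed_segment (vector [4, 4]) (vector [2, 3])" by (simp only: U4_edges)
    thus "\<exists>m\<in>Mset. on_aligned m e U4" using U4_oa_0_8 U4_oa_1_4 U4_oa_2_6 unfolding Mset_def by blast
  qed
  have fcP: "fully_consistent {U1, U2, U3, U4} Mset"
    unfolding fully_consistent_def using consP cov_U1 cov_U2 cov_U3 cov_U4 by blast
  show ?thesis
    apply (rule exI[of _ "{T1, T2, T3, T4}"], rule exI[of _ "{U1, U2, U3, U4}"], rule exI[of _ Mset])
    using ne mk dS dS' fcS fcP unfolding Mset_def by simp
qed

end
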